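(* In the setting of the context, suppose $\rho$ is law-invariant and the return vector $R$ has an elliptical distribution with mean vector $\mu\in\mathbb{R}^d$ with $\mu\ne r\mathbf{1}$, positive definite covariance matrix $\Sigma$ and characteristic generator $\psi$. Assume that every real random variable with distribution $E_1(\mu_X,\sigma_X^2,\psi)$, $\mu_X\in\mathbb{R}$, $\sigma_X^2\ge0$, belongs to $L$, and let $Z\sim E_1(0,1,\psi)$. Define $$\mathrm{SR}_{\max}:=\max_{\pi\in\mathbb{R}^d\setminus\{\mathbf{0}\}}\frac{\mathbb{E}[X_\pi]}{\sqrt{\operatorname{Var}(X_\pi)}}=\sqrt{(\mu-r\mathbf{1})^\top\Sigma^{-1}(\mu-r\mathbf{1})}.$$ Then: (a) if $\mathrm{SR}_{\max}<\rho(Z)$, the market does not admit $\rho$-arbitrage; (b) if $\mathrm{SR}_{\max}=\rho(Z)$, the market admits $\rho$-arbitrage but not strong $\rho$-arbitrage; (c) if $\mathrm{SR}_{\max}>\rho(Z)$, the market admits strong $\rho$-arbitrage. In particular, if $\rho(Z)\le0$, the market admits strong $\rho$-arbitrage regardless of $\mu$ and $\Sigma$. Moreover, if $\rho(Z)<0$ and $d\ge2$, then $\Pi^\rho_\nu=\emptyset$ for every $\nu\ge0$, regardless of $\mu$ and $\Sigma$.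
   Context: Let $(\Omega,\mathcal{F},\mathbb{P})$ be a probability space and a market: riskless asset $S^0_0=1$, $S^0_1=1+r$, $r>-1$; risky assets $S^1,\dots,S^d$ with constants $S^i_0>0$ and real-valued $\mathcal{F}$-measurable $S^i_1$; returns $R^i:=(S^i_1-S^i_0)/S^i_0$. Standing assumptions: nonredundancy (if $\theta\in\mathbb{R}^{1+d}$ with $\sum_{i=0}^d\theta^iS^i_t=0$ a.s. for $t\in\{0,1\}$ then $\theta=0$), $R^i\in L^1$, $\mathbb{E}[R^i]\ne r$ for some $i$. Excess return: $X_\pi:=\pi\cdot(R-r\mathbf{1})$; $\Pi_\nu:=\{\pi:\mathbb{E}[X_\pi]=\nu\}$. $L$ is a Riesz space with $L^\infty\subset L\subset L^1$ containing all $X_\pi$; $\rho:L\to(-\infty,\infty]$ is monotone, cash-invariant and positively homogeneous, and law-invariant means $\rho(X_1)=\rho(X_2)$ whenever $X_1,X_2\in L$ have the same law. $\Pi^\rho_\nu$ is the set of $\pi\in\Pi_\nu$ with $\rho(X_\pi)<\infty$ and $\rho(X_\pi)\le\rho(X_{\pi'})$ for all $\pi'\in\Pi_\nu$. A random vector $X$ in $\mathbb{R}^d$ is elliptical if its characteristic function is $t\mapsto e^{it^\top\tilde\mu}\psi(t^\top\tilde\Sigma t)$ for some $\tilde\mu\in\mathbb{R}^d$, nonnegative definite $\tilde\Sigma$ and function $\psi:[0,\infty)\to\mathbb{R}$ (the characteristic generator); if it has finite second moments it is characterised by its mean $\mu$, covariance $\Sigma$ and $\psi$, written $X\sim E_d(\mu,\Sigma,\psi)$.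 $\pi$ is $\rho$-efficient if $\mathbb{E}[X_\pi]\ge0$ and no $\pi'$ has $\mathbb{E}[X_{\pi'}]\ge\mathbb{E}[X_\pi]$, $\rho(X_{\pi'})\le\rho(X_\pi)$ with one inequality strict; $\rho$-arbitrage: no $\rho$-efficient portfolio; strong $\rho$-arbitrage: for every $\pi$ there is $\pi'$ with $\mathbb{E}[X_{\pi'}]>\mathbb{E}[X_\pi]$ and $\rho(X_{\pi'})<\rho(X_\pi)$. Here $\rho(Z)\in(-\infty,\infty]$. *)

theory Defs
  imports "HOL-Probability.Probability"
begin

definition excess_ret :: "('a \<Rightarrow> real^'d) \<Rightarrow> real \<Rightarrow> real^'d \<Rightarrow> 'a \<Rightarrow> real" where
  "excess_ret R r p = (\<lambda>\<omega>. p \<bullet> (R \<omega> - (\<chi> i. r)))"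

definition Pi_nu :: "'a measure \<Rightarrow> ('a \<Rightarrow> real^'d) \<Rightarrow> real \<Rightarrow> real \<Rightarrow> (real^'d) set" where
  "Pi_nu M R r nu = {p. integral\<^sup>L M (excess_ret R r p) = nu}"

definition Pi_rho_nu :: "'a measure \<Rightarrow> (('a \<Rightarrow> real) \<Rightarrow> ereal) \<Rightarrow> ('a \<Rightarrow> real^'d) \<Rightarrow> real \<Rightarrow> real
    \<Rightarrow> (real^'d) set" where
  "Pi_rho_nu M rho R r nu = {p \<in> Pi_nu M R r nu. rho (excess_ret R r p) < \<infinity> \<and>
      (\<forall>q \<in> Pi_nu M R r nu. rho (excess_ret R r p) \<le> rho (excess_ret R r q))}"

definition rho_efficient :: "'a measure \<Rightarrow> (('a \<Rightarrow> real) \<Rightarrow> ereal) \<Rightarrow> ('a \<Rightarrow> real^'d) \<Rightarrow> real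
    \<Rightarrow> real^'d \<Rightarrow> bool" where
  "rho_efficient M rho R r p \<longleftrightarrow>
     integral\<^sup>L M (excess_ret R r p) \<ge> 0 \<and>
     \<not> (\<exists>q. integral\<^sup>L M (excess_ret R r q) \<ge> integral\<^sup>L M (excess_ret R r p) \<and>
             rho (excess_ret R r q) \<le> rho (excess_ret R r p) \<and>
             (integral\<^sup>L M (excess_ret R r q) > integral\<^sup>L M (excess_ret R r p) \<or>
              rho (excess_ret R r q) < rho (excess_ret R r p)))"

definition rho_arbitrage :: "'a measure \<Rightarrow> (('a \<Rightarrow> real) \<Rightarrow> ereal) \<Rightarrow> ('a \<Rightarrow> real^'d) \<Rightarrow> real \<Rightarrow> bool" where
  "rho_arbitrage M rho R r \<longleftrightarrow> \<not> (\<exists>p. rho_efficient M rho R r p)"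

definition strong_rho_arbitrage :: "'a measure \<Rightarrow> (('a \<Rightarrow> real) \<Rightarrow> ereal) \<Rightarrow> ('a \<Rightarrow> real^'d) \<Rightarrow> real \<Rightarrow> bool" where
  "strong_rho_arbitrage M rho R r \<longleftrightarrow>
     (\<forall>p. \<exists>q. integral\<^sup>L M (excess_ret R r q) > integral\<^sup>L M (excess_ret R r p) \<and>
                 rho (excess_ret R r q) < rho (excess_ret R r p))"

definition elliptical_Ed :: "'a measure \<Rightarrow> ('a \<Rightarrow> real^'d) \<Rightarrow> real^'d \<Rightarrow> real^'d^'d \<Rightarrow> (real \<Rightarrow> real) \<Rightarrow> bool" where
  "elliptical_Ed M X mu Sig psi \<longleftrightarrow>
     X \<in> borel_measurable M \<and>
     (\<forall>i. integrable M (\<lambda>\<omega>. (X \<omega> $ i)\<^sup>2)) \<and>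
     (\<forall>i. integral\<^sup>L M (\<lambda>\<omega>. X \<omega> $ i) = mu $ i) \<and>
     (\<forall>i j. integral\<^sup>L M (\<lambda>\<omega>. (X \<omega> $ i - mu $ i) * (X \<omega> $ j - mu $ j)) = Sig $ i $ j) \<and>
     (\<forall>t. integral\<^sup>L M (\<lambda>\<omega>. iexp (t \<bullet> X \<omega>)) =
            iexp (t \<bullet> mu) * complex_of_real (psi (t \<bullet> (Sig *v t))))"

definition elliptical_E1 :: "'a measure \<Rightarrow> ('a \<Rightarrow> real) \<Rightarrow> real \<Rightarrow> real \<Rightarrow> (real \<Rightarrow> real) \<Rightarrow> bool" where
  "elliptical_E1 M X m v psi \<longleftrightarrow>
     X \<in> borel_measurable M \<and>
     integrable M (\<lambda>\<omega>. (X \<omega>)\<^sup>2) \<and>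
     integral\<^sup>L M X = m \<and>
     integral\<^sup>L M (\<lambda>\<omega>. (X \<omega> - m)\<^sup>2) = v \<and>
     (\<forall>t. integral\<^sup>L M (\<lambda>\<omega>. iexp (t * X \<omega>)) =
            iexp (t * m) * complex_of_real (psi (t\<^sup>2 * v)))"

definition pos_def :: "real^'d^'d \<Rightarrow> bool" where
  "pos_def A \<longleftrightarrow> transpose A = A \<and> (\<forall>x. x \<noteq> 0 \<longrightarrow> x \<bullet> (A *v x) > 0)"

definition SR_max :: "real^'d \<Rightarrow> real^'d^'d \<Rightarrow> real \<Rightarrow> real" where
  "SR_max mu Sig r = sqrt ((mu - (\<chi> i. r)) \<bullet> (matrix_inv Sig *v (mu - (\<chi> i. r))))"

end

theory Submission
  imports Defs
begin

definition qf :: "real^'n^'n \<Rightarrow> real^'n \<Rightarrow> real^'n \<Rightarrow> real" where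
  "qf S x y = x \<bullet> (S *v y)"

lemma qf_sym: "transpose S = S \<Longrightarrow> qf S x y = qf S y x"
  unfolding qf_def
  by (metis dot_lmul_matrix inner_commute transpose_matrix_vector)

lemma qf_add_left: "qf S (x + y) z = qf S x z + qf S y z"
  by (simp add: qf_def inner_add_left)
lemma qf_add_right: "qf S x (y + z) = qf S x y + qf S x z"
  by (simp add: qf_def matrix_vector_right_distrib inner_add_right)
lemma qf_scale_left: "qf S (c *\<^sub>R x) z = c * qf S x z"
  by (simp add: qf_def)
lemma qf_scale_right: "qf S x (c *\<^sub>R z) = c * qf S x z"
  by (simp add: qf_def matrix_vector_mult_scaleR)
lemma qf_zero_left[simp]: "qf S 0 z = 0" by (simp add: qf_def)
lemma qf_zero_right[simp]: "qf S z 0 = 0" by (simp add: qf_def)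

lemma qf_expand: assumes "transpose S = S"
  shows "qf S (x + t *\<^sub>R y) (x + t *\<^sub>R y) = qf S x x + 2*t*qf S x y + t^2 * qf S y y"
  using qf_sym[OF assms, of y x]
  by (simp add: qf_add_left qf_add_right qf_scale_left qf_scale_right power2_eq_square algebra_simps)

lemma qf_CS:
  assumes sym: "transpose S = S" and psd: "\<And>x. qf S x x \<ge> 0"
  shows "(qf S x y)^2 \<le> qf S x x * qf S y y"
proof (cases "qf S y y = 0")
  case True
  have "\<forall>t. 0 \<le> qf S x x + 2*t*qf S x y" using psd[of "x + _ *\<^sub>R y"] qf_expand[OF sym, of x _ y] True by auto
  then have "qf S x y = 0"
  proof -
    assume h: "\<forall>t. 0 \<le> qf S x x + 2*t*qf S x y"
    show ?thesis
    proof (rule ccontr)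
      assume ne: "qf S x y \<noteq> 0"
      have "0 \<le> qf S x x + 2*(-(qf S x x + 1)/(2*qf S x y))*qf S x y" using h by blast
      also have "\<dots> = -1" using ne by (simp add: field_simps)
      finally show False by simp
    qed
  qed
  then show ?thesis using True by simp
next
  case False
  then have pos: "qf S y y > 0" using psd[of y] by simp
  define t where "t = - qf S x y / qf S y y"
  have "0 \<le> qf S x x + 2*t*qf S x y + t^2 * qf S y y"
    using psd[of "x + t *\<^sub>R y"] qf_expand[OF sym] by metis
  also have "\<dots> = qf S x x - (qf S x y)^2 / qf S y y"
    using pos by (simp add: t_def field_simps power2_eq_square)
  finally show ?thesis using pos by (simp add: field_simps)
qed

lemma qf_CS_abs:
  assumes sym: "transpose S = S" and psd: "\<And>x. qf S x x \<ge> 0"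
  shows "\<bar>qf S x y\<bar> \<le> sqrt (qf S x x) * sqrt (qf S y y)"
proof -
  have "\<bar>qf S x y\<bar> = sqrt ((qf S x y)^2)" by simp
  also have "\<dots> \<le> sqrt (qf S x x * qf S y y)" using qf_CS[OF assms] real_sqrt_le_mono by blast
  also have "\<dots> = sqrt (qf S x x) * sqrt (qf S y y)" by (simp add: real_sqrt_mult)
  finally show ?thesis .
qed

lemma qf_triangle:
  assumes sym: "transpose S = S" and psd: "\<And>x. qf S x x \<ge> 0"
  shows "sqrt (qf S (x + y) (x + y)) \<le> sqrt (qf S x x) + sqrt (qf S y y)"
proof -
  have "qf S (x + y) (x + y) = qf S x x + 2 * qf S x y + qf S y y"
    using qf_expand[OF sym, of x 1 y] by simp
  also have "\<dots> \<le> qf S x x + 2 * (sqrt (qf S x x) * sqrt (qf S y y)) + qf S y y"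
    using qf_CS_abs[OF assms, of x y] by linarith
  also have "\<dots> = (sqrt (qf S x x) + sqrt (qf S y y))^2"
    using psd[of x] psd[of y] by (simp add: power2_eq_square algebra_simps)
  finally show ?thesis
    using psd[of x] psd[of y] real_le_lsqrt by (simp add: real_sqrt_le_iff) 
qed

lemma qf_scale_sqrt:
  assumes psd: "\<And>x. qf S x x \<ge> 0"
  shows "sqrt (qf S (c *\<^sub>R x) (c *\<^sub>R x)) = \<bar>c\<bar> * sqrt (qf S x x)"
proof -
  have "qf S (c *\<^sub>R x) (c *\<^sub>R x) = c^2 * qf S x x"
    by (simp add: qf_scale_left qf_scale_right power2_eq_square)
  then show ?thesis by (simp add: real_sqrt_mult)
qed


lemma law_char:
  fixes M :: "'a measure" and R :: "'a \<Rightarrow> real^'d" and Z :: "'a \<Rightarrow> real"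
  assumes P: "prob_space M"
    and R_ell: "elliptical_Ed M R mu Sig psi"
    and Z_ell: "elliptical_E1 M Z 0 1 psi"
    and psd: "p \<bullet> (Sig *v p) \<ge> 0"
  shows "distr M borel (excess_ret R r p) =
         distr M borel (\<lambda>\<omega>. sqrt (p \<bullet> (Sig *v p)) * Z \<omega> + p \<bullet> (mu - (\<chi> i. r)))"
proof -
  interpret prob_space M by (rule P)
  have Rm[measurable]: "R \<in> borel_measurable M" using R_ell by (simp add: elliptical_Ed_def)
  have Zm[measurable]: "Z \<in> borel_measurable M" using Z_ell by (simp add: elliptical_E1_def)
  have Xm[measurable]: "excess_ret R r p \<in> borel_measurable M" unfolding excess_ret_def by measurable
  define s where "s = sqrt (p \<bullet> (Sig *v p))"
  define m where "m = p \<bullet> (mu - (\<chi> i. r))"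
  have s2: "s^2 = p \<bullet> (Sig *v p)" using psd by (simp add: s_def)
  have RC: "\<And>t. integral\<^sup>L M (\<lambda>\<omega>. iexp (t \<bullet> R \<omega>)) = iexp (t \<bullet> mu) * complex_of_real (psi (t \<bullet> (Sig *v t)))"
    using R_ell by (simp add: elliptical_Ed_def)
  have ZC: "\<And>t. integral\<^sup>L M (\<lambda>\<omega>. iexp (t * Z \<omega>)) = complex_of_real (psi (t\<^sup>2))"
    using Z_ell by (simp add: elliptical_E1_def)
  have "char (distr M borel (excess_ret R r p)) t = char (distr M borel (\<lambda>\<omega>. s * Z \<omega> + m)) t" for t
  proof -
    have "char (distr M borel (excess_ret R r p)) t = (CLINT \<omega>|M. iexp (t * excess_ret R r p \<omega>))"
      by (simp add: char_def integral_distr)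
    also have "\<dots> = (CLINT \<omega>|M. iexp (- (t * (p \<bullet> (\<chi> i. r)))) * iexp ((t *\<^sub>R p) \<bullet> R \<omega>))"
      by (rule Bochner_Integration.integral_cong) (auto simp: excess_ret_def inner_diff_right algebra_simps simp flip: exp_add)
    also have "\<dots> = iexp (- (t * (p \<bullet> (\<chi> i. r)))) * (CLINT \<omega>|M. iexp ((t *\<^sub>R p) \<bullet> R \<omega>))"
      by (rule integral_mult_right_zero)
    also have "\<dots> = iexp (- (t * (p \<bullet> (\<chi> i. r)))) * iexp ((t *\<^sub>R p) \<bullet> mu) * complex_of_real (psi (t^2 * (p \<bullet> (Sig *v p))))"
    proof -
      have "(t *\<^sub>R p) \<bullet> (Sig *v (t *\<^sub>R p)) = t^2 * (p \<bullet> (Sig *v p))"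
        by (simp add: matrix_vector_mult_scaleR power2_eq_square)
      then show ?thesis by (simp only: RC mult.assoc)
    qed
    also have "\<dots> = iexp (t * m) * complex_of_real (psi ((t * s)^2))"
      by (simp add: m_def s2 power_mult_distrib inner_diff_right algebra_simps flip: exp_add)
    also have "\<dots> = iexp (t * m) * (CLINT \<omega>|M. iexp ((t * s) * Z \<omega>))"
      by (simp only: ZC)
    also have "\<dots> = (CLINT \<omega>|M. iexp (t * m) * iexp ((t * s) * Z \<omega>))"
      by (rule integral_mult_right_zero[symmetric])
    also have "\<dots> = (CLINT \<omega>|M. iexp (t * (s * Z \<omega> + m)))"
      by (rule Bochner_Integration.integral_cong) (auto simp: algebra_simps simp flip: exp_add)
    also have "\<dots> = char (distr M borel (\<lambda>\<omega>. s * Z \<omega> + m)) t"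
      by (simp add: char_def integral_distr)
    finally show ?thesis .
  qed
  then have "distr M borel (excess_ret R r p) = distr M borel (\<lambda>\<omega>. s * Z \<omega> + m)"
    by (intro Levy_uniqueness real_distribution_distr) auto
  then show ?thesis by (simp add: s_def m_def)
qed

lemma excess_mean:
  fixes M :: "'a measure" and R :: "'a \<Rightarrow> real^'d"
  assumes P: "prob_space M"
    and R_int: "\<forall>i. integrable M (\<lambda>\<omega>. R \<omega> $ i)"
    and R_ell: "elliptical_Ed M R mu Sig psi"
  shows "integral\<^sup>L M (excess_ret R r p) = p \<bullet> (mu - (\<chi> i. r))"
proof -
  interpret prob_space M by (rule P)
  have mu: "\<And>i. integral\<^sup>L M (\<lambda>\<omega>. R \<omega> $ i) = mu $ i" using R_ell by (simp add: elliptical_Ed_def)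
  have "integral\<^sup>L M (excess_ret R r p) = integral\<^sup>L M (\<lambda>\<omega>. \<Sum>i\<in>UNIV. p $ i * (R \<omega> $ i - r))"
    by (simp add: excess_ret_def inner_vec_def)
  also have "\<dots> = (\<Sum>i\<in>UNIV. integral\<^sup>L M (\<lambda>\<omega>. p $ i * (R \<omega> $ i - r)))"
    by (rule Bochner_Integration.integral_sum) (use R_int in auto)
  also have "\<dots> = (\<Sum>i\<in>UNIV. p $ i * (mu $ i - r))"
    using R_int by (simp add: mu prob_space)
  also have "\<dots> = p \<bullet> (mu - (\<chi> i. r))" by (simp add: inner_vec_def)
  finally show ?thesis .
qed


theorem corollary3p28:
  fixes M :: "'a measure" and r :: real
    and S0 :: "real^'d" and S1 :: "'a \<Rightarrow> real^'d" and R :: "'a \<Rightarrow> real^'d"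
    and L :: "('a \<Rightarrow> real) set" and rho :: "('a \<Rightarrow> real) \<Rightarrow> ereal"
    and mu :: "real^'d" and Sig :: "real^'d^'d" and psi :: "real \<Rightarrow> real"
    and Z :: "'a \<Rightarrow> real"
  assumes P: "prob_space M"
    and r_gt: "r > -1"
    and S0_pos: "\<forall>i. S0 $ i > 0"
    and S1_meas: "S1 \<in> borel_measurable M"
    and R_def: "\<forall>\<omega>. \<forall>i. R \<omega> $ i = (S1 \<omega> $ i - S0 $ i) / S0 $ i"
    and nonredundant: "\<forall>th0 (th :: real^'d).
          (th0 + th \<bullet> S0 = 0 \<and> (AE \<omega> in M. th0 * (1 + r) + th \<bullet> S1 \<omega> = 0))
          \<longrightarrow> th0 = 0 \<and> th = 0"
    and R_int: "\<forall>i. integrable M (\<lambda>\<omega>. R \<omega> $ i)"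
    and mean_ne: "\<exists>i. integral\<^sup>L M (\<lambda>\<omega>. R \<omega> $ i) \<noteq> r"
    \<comment> \<open>L is a Riesz space with L^infinity \<subseteq> L \<subseteq> L^1 containing all excess returns\<close>
    and L_int: "\<forall>X\<in>L. integrable M X"
    and L_bdd: "\<forall>X. X \<in> borel_measurable M \<and> (\<exists>B. \<forall>\<omega>\<in>space M. \<bar>X \<omega>\<bar> \<le> B) \<longrightarrow> X \<in> L"
    and L_add: "\<forall>X\<in>L. \<forall>Y\<in>L. (\<lambda>\<omega>. X \<omega> + Y \<omega>) \<in> L"
    and L_scale: "\<forall>X\<in>L. \<forall>c::real. (\<lambda>\<omega>. c * X \<omega>) \<in> L"
    and L_max: "\<forall>X\<in>L. \<forall>Y\<in>L. (\<lambda>\<omega>. max (X \<omega>) (Y \<omega>)) \<in> L"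
    and L_X: "\<forall>p. excess_ret R r p \<in> L"
    \<comment> \<open>rho : L \<rightarrow> (-\<infinity>, \<infinity>], monotone, cash-invariant, positively homogeneous, law-invariant\<close>
    and rho_fin: "\<forall>X\<in>L. rho X \<noteq> -\<infinity>"
    and rho_mono: "\<forall>X\<in>L. \<forall>Y\<in>L. (AE \<omega> in M. X \<omega> \<le> Y \<omega>) \<longrightarrow> rho Y \<le> rho X"
    and rho_cash: "\<forall>X\<in>L. \<forall>c::real. rho (\<lambda>\<omega>. X \<omega> + c) = rho X - ereal c"
    and rho_hom: "\<forall>X\<in>L. \<forall>c::real. c \<ge> 0 \<longrightarrow> rho (\<lambda>\<omega>. c * X \<omega>) = ereal c * rho X"
    and rho_law: "\<forall>X\<in>L. \<forall>Y\<in>L. distr M borel X = distr M borel Y \<longrightarrow> rho X = rho Y"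
    \<comment> \<open>elliptical returns\<close>
    and R_ell: "elliptical_Ed M R mu Sig psi"
    and mu_ne: "mu \<noteq> (\<chi> i. r)"
    and Sigma_pd: "pos_def Sig"
    and L_ell: "\<forall>X m v. v \<ge> 0 \<and> elliptical_E1 M X m v psi \<longrightarrow> X \<in> L"
    and Z_ell: "elliptical_E1 M Z 0 1 psi"
  shows "(ereal (SR_max mu Sig r) < rho Z \<longrightarrow> \<not> rho_arbitrage M rho R r)
    \<and> (ereal (SR_max mu Sig r) = rho Z \<longrightarrow>
          rho_arbitrage M rho R r \<and> \<not> strong_rho_arbitrage M rho R r)
    \<and> (ereal (SR_max mu Sig r) > rho Z \<longrightarrow> strong_rho_arbitrage M rho R r)
    \<and> (rho Z \<le> 0 \<longrightarrow> strong_rho_arbitrage M rho R r)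
    \<and> (rho Z < 0 \<and> CARD('d) \<ge> 2 \<longrightarrow> (\<forall>nu \<ge> 0. Pi_rho_nu M rho R r nu = {}))"
proof -
  interpret prob_space M by (rule P)
  define c :: "real^'d" where "c = (\<chi> i. r)"
  define a where "a = mu - c"
  define sg where "sg p = sqrt (qf Sig p p)" for p
  define m where "m p = p \<bullet> a" for p
  define rZ where "rZ = rho Z"
  have sym: "transpose Sig = Sig" using Sigma_pd by (simp add: pos_def_def)
  have pd: "\<And>x. x \<noteq> 0 \<Longrightarrow> qf Sig x x > 0" using Sigma_pd by (simp add: pos_def_def qf_def)
  have psd: "\<And>x. qf Sig x x \<ge> 0"
  proof -
    fix x show "qf Sig x x \<ge> 0" using pd[of x] by (cases "x = 0") auto
  qed
  have sg_nonneg: "\<And>x. sg x \<ge> 0" using psd by (simp add: sg_def)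
  have sg_tri: "\<And>x y. sg (x + y) \<le> sg x + sg y" unfolding sg_def by (rule qf_triangle[OF sym psd])
  have sg_scale: "\<And>t x. sg (t *\<^sub>R x) = \<bar>t\<bar> * sg x" unfolding sg_def by (rule qf_scale_sqrt[OF psd])
  have sg_pos: "\<And>x. x \<noteq> 0 \<Longrightarrow> sg x > 0" using pd by (simp add: sg_def)
  have sg0: "sg 0 = 0" by (simp add: sg_def)
  have m_add: "\<And>x y. m (x + y) = m x + m y" by (simp add: m_def inner_add_left)
  have m_scale: "\<And>t x. m (t *\<^sub>R x) = t * m x" by (simp add: m_def)
  have ZL: "Z \<in> L" using L_ell[rule_format, of 1 Z 0] Z_ell by simp
  have rZ_fin: "rZ \<noteq> -\<infinity>" using rho_fin ZL by (simp add: rZ_def)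
  have E: "\<And>p. integral\<^sup>L M (excess_ret R r p) = m p"
    using excess_mean[OF P R_int R_ell] by (simp add: m_def a_def c_def)
  have key: "\<And>p. rho (excess_ret R r p) = ereal (sg p) * rZ - ereal (m p)"
  proof -
    fix p
    have d: "distr M borel (excess_ret R r p) = distr M borel (\<lambda>\<omega>. sg p * Z \<omega> + m p)"
      using law_char[OF P R_ell Z_ell, of p r] psd[of p]
      by (simp add: sg_def m_def a_def c_def qf_def)
    have sZL: "(\<lambda>\<omega>. sg p * Z \<omega>) \<in> L" using L_scale ZL by blast
    have cL: "(\<lambda>\<omega>. m p) \<in> L" using L_bdd[rule_format, of "\<lambda>\<omega>. m p"] by auto
    have YL: "(\<lambda>\<omega>. sg p * Z \<omega> + m p) \<in> L" using L_add sZL cL by fastforce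
    have "rho (excess_ret R r p) = rho (\<lambda>\<omega>. sg p * Z \<omega> + m p)"
      using rho_law L_X YL d by blast
    also have "\<dots> = rho (\<lambda>\<omega>. sg p * Z \<omega>) - ereal (m p)"
      using rho_cash sZL by fastforce
    also have "\<dots> = ereal (sg p) * rZ - ereal (m p)"
      using rho_hom ZL sg_nonneg[of p] by (simp add: rZ_def)
    finally show "rho (excess_ret R r p) = ereal (sg p) * rZ - ereal (m p)" .
  qed
  have rho0: "rho (excess_ret R r 0) = 0" using key[of 0] sg0 by (cases rZ) (auto simp: m_def)
  have ker: "\<forall>x. Sig *v x = 0 \<longrightarrow> x = 0"
    using pd by (metis inner_zero_right less_irrefl qf_def)
  then obtain Bm where "Bm ** Sig = mat 1" using matrix_left_invertible_ker by blast
  then have inv: "invertible Sig" using invertible_left_inverse by blast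
  have SigInv: "Sig ** matrix_inv Sig = mat 1"
    using inv unfolding invertible_def matrix_inv_def by (rule someI_ex[where P = "\<lambda>A'. Sig ** A' = mat 1 \<and> A' ** Sig = mat 1", THEN conjunct1])
  define w where "w = matrix_inv Sig *v a"
  have Sw: "Sig *v w = a" by (simp add: w_def matrix_vector_mul_assoc SigInv)
  have a_ne: "a \<noteq> 0" using mu_ne by (simp add: a_def c_def)
  have w_ne: "w \<noteq> 0" using Sw a_ne by auto
  define SR where "SR = SR_max mu Sig r"
  have qfw: "\<And>q. qf Sig q w = m q" by (simp add: qf_def Sw m_def)
  have SRw: "SR = sg w" 
  proof -
    have q: "qf Sig w w = a \<bullet> w" by (simp add: qf_def Sw inner_commute)
    have "SR = sqrt (a \<bullet> w)" by (simp add: SR_def SR_max_def w_def a_def c_def)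
    then show ?thesis using q by (simp add: sg_def)
  qed
  have SR_pos: "SR > 0" using SRw sg_pos w_ne by simp
  have mw: "m w = SR^2" using qfw[of w] SRw psd[of w] by (simp add: sg_def)
  have CS: "\<And>q. m q \<le> sg q * SR"
    using qf_CS_abs[OF sym psd] qfw SRw by (metis abs_le_iff sg_def)
  have rho_fin_case: "\<And>z q. rZ = ereal z \<Longrightarrow> rho (excess_ret R r q) = ereal (sg q * z - m q)"
    using key by simp
  have partc: "ereal SR > rZ \<Longrightarrow> strong_rho_arbitrage M rho R r"
  proof -
    assume lt: "ereal SR > rZ"
    then obtain z where z: "rZ = ereal z" "z < SR" using rZ_fin by (cases rZ) auto
    show ?thesis unfolding strong_rho_arbitrage_def
    proof
      fix p
      define K where "K = (2 * sg p * \<bar>z\<bar> + 1) / (SR - z)"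
      have Kpos: "K > 0" using z sg_nonneg[of p] by (simp add: K_def divide_pos_pos add_nonneg_pos)
      have KK: "K * SR - K * z = 2 * sg p * \<bar>z\<bar> + 1" 
      proof -
        have "K * SR - K * z = K * (SR - z)" by (simp add: algebra_simps)
        also have "\<dots> = 2 * sg p * \<bar>z\<bar> + 1" using z by (simp add: K_def)
        finally show ?thesis .
      qed
      define q where "q = p + (K / SR) *\<^sub>R w"
      have mq: "m q = m p + K * SR" using SR_pos by (simp add: q_def m_add m_scale mw power2_eq_square)
      have sgKw: "sg ((K / SR) *\<^sub>R w) = K" using SR_pos Kpos by (simp add: sg_scale SRw[symmetric])
      have up: "sg q \<le> sg p + K" using sg_tri[of p "(K / SR) *\<^sub>R w"] sgKw by (simp add: q_def)
      have "K = sg (q + (-1) *\<^sub>R p)" using sgKw by (simp add: q_def)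
      also have "\<dots> \<le> sg q + sg p" using sg_tri[of q "(-1) *\<^sub>R p"] sg_scale[of "-1" p] by simp
      finally have lo: "K - sg p \<le> sg q" by simp
      have "sg q * z - m q < sg p * z - m p"
      proof (cases "z \<ge> 0")
        case True
        have "sg q * z \<le> (sg p + K) * z" using up True by (rule mult_right_mono)
        moreover have "z * sg p \<ge> 0" using True sg_nonneg[of p] by simp
        ultimately show ?thesis using mq KK True by (simp add: algebra_simps)
      next
        case False
        have "sg q * z \<le> (K - sg p) * z" using lo False by (intro mult_right_mono_neg) auto
        then show ?thesis using mq KK False by (simp add: algebra_simps)
      qed
      then show "\<exists>q. integral\<^sup>L M (excess_ret R r q) > integral\<^sup>L M (excess_ret R r p) \<and>
                 rho (excess_ret R r q) < rho (excess_ret R r p)"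
        using mq Kpos SR_pos E rho_fin_case[OF z(1)] by (intro exI[of _ q]) auto
    qed
  qed
  have parta: "ereal SR < rZ \<Longrightarrow> \<not> rho_arbitrage M rho R r"
  proof -
    assume lt: "ereal SR < rZ"
    have "rho_efficient M rho R r 0"
      unfolding rho_efficient_def
    proof (intro conjI notI)
      show "integral\<^sup>L M (excess_ret R r 0) \<ge> 0" using E by (simp add: m_def)
    next
      assume "\<exists>q. integral\<^sup>L M (excess_ret R r q) \<ge> integral\<^sup>L M (excess_ret R r 0) \<and>
             rho (excess_ret R r q) \<le> rho (excess_ret R r 0) \<and>
             (integral\<^sup>L M (excess_ret R r q) > integral\<^sup>L M (excess_ret R r 0) \<or>
              rho (excess_ret R r q) < rho (excess_ret R r 0))"
      then obtain q where q1: "m q \<ge> 0" and q2: "rho (excess_ret R r q) \<le> 0"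
        and q3: "m q > 0 \<or> rho (excess_ret R r q) < 0"
        using E rho0 by (auto simp: m_def)
      show False
      proof (cases "rZ = \<infinity>")
        case True
        show False
        proof (cases "q = 0")
          case True
          then show False using q3 rho0 by (simp add: m_def)
        next
          case False
          then have "sg q > 0" by (rule sg_pos)
          then have "rho (excess_ret R r q) = \<infinity>" using key[of q] \<open>rZ = \<infinity>\<close> by simp
          then show False using q2 by simp
        qed
      next
        case False
        then obtain z where z: "rZ = ereal z" using rZ_fin by (cases rZ) auto
        then have zSR: "SR < z" using lt by simp
        have h: "sg q * z - m q \<le> 0" using q2 rho_fin_case[OF z] by (simp add: zero_ereal_def)
        have "sg q * (z - SR) \<le> 0" using h CS[of q] by (simp add: algebra_simps)
        moreover have "sg q * (z - SR) \<ge> 0" using sg_nonneg[of q] zSR by simp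
        ultimately have "sg q * (z - SR) = 0" by simp
        then have "sg q = 0" using zSR by simp
        then have "m q = 0" using CS[of q] q1 by simp
        then show False using q3 rho_fin_case[OF z, of q] \<open>sg q = 0\<close> by (simp add: zero_ereal_def)
      qed
    qed
    then show ?thesis by (auto simp: rho_arbitrage_def)
  qed
  have partb: "ereal SR = rZ \<Longrightarrow> rho_arbitrage M rho R r \<and> \<not> strong_rho_arbitrage M rho R r"
  proof -
    assume eq: "ereal SR = rZ"
    have rq: "\<And>q. rho (excess_ret R r q) = ereal (sg q * SR - m q)" using rho_fin_case eq by simp
    have rq0: "\<And>q. rho (excess_ret R r q) \<ge> 0" using rq CS by (simp add: zero_ereal_def)
    have "\<not> rho_efficient M rho R r p" for p
    proof
      assume ef: "rho_efficient M rho R r p"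
      define q where "q = ((m p + 1) / SR^2) *\<^sub>R w"
      have mp: "m p \<ge> 0" using ef E by (simp add: rho_efficient_def)
      have mq: "m q = m p + 1" using SR_pos by (simp add: q_def m_scale mw)
      have sq: "sg q = (m p + 1) / SR" using SR_pos mp by (simp add: q_def sg_scale SRw[symmetric] power2_eq_square)
      have "rho (excess_ret R r q) = 0" using rq[of q] mq sq SR_pos by (simp add: power2_eq_square zero_ereal_def)
      then show False using ef E mq rq0[of p] unfolding rho_efficient_def by (metis less_add_one order_less_imp_le)
    qed
    then have "rho_arbitrage M rho R r" by (simp add: rho_arbitrage_def)
    moreover have "\<not> strong_rho_arbitrage M rho R r"
      unfolding strong_rho_arbitrage_def using rho0 rq0 by (metis not_less)
    ultimately show ?thesis by simp
  qed
  have partd: "rZ \<le> 0 \<Longrightarrow> strong_rho_arbitrage M rho R r"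
    using partc SR_pos by (metis ereal_less(2) order.strict_trans1 less_ereal.simps(1) zero_ereal_def)
  have parte: "rZ < 0 \<and> CARD('d) \<ge> 2 \<Longrightarrow> (\<forall>nu \<ge> 0. Pi_rho_nu M rho R r nu = {})"
  proof -
    assume h: "rZ < 0 \<and> CARD('d) \<ge> 2"
    then obtain z where z: "rZ = ereal z" "z < 0" using rZ_fin by (cases rZ) auto
    have "\<exists>i j::'d. i \<noteq> j"
    proof (rule ccontr)
      assume "\<not> (\<exists>i j::'d. i \<noteq> j)"
      then have "(UNIV :: 'd set) = {undefined}" by auto
      then have "CARD('d) = 1" by (metis card.empty card_insert_disjoint empty_iff finite.emptyI One_nat_def)
      then show False using h by simp
    qed
    then obtain i j :: 'd where ij: "i \<noteq> j" by blast
    define v where "v = (if a$i = 0 \<and> a$j = 0 then axis i 1 else axis i (a$j) - axis j (a$i))"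
    have v_ne: "v \<noteq> 0"
    proof (cases "a$i = 0 \<and> a$j = 0")
      case True then show ?thesis by (simp add: v_def axis_eq_0_iff)
    next
      case False
      have "v $ i = a $ j" "v $ j = - a $ i" using False ij by (auto simp: v_def axis_def)
      then show ?thesis using False by (metis neg_equal_0_iff_equal zero_index)
    qed
    have mv: "m v = 0" using ij by (auto simp: v_def m_def inner_axis' inner_diff_left)
    show "\<forall>nu \<ge> 0. Pi_rho_nu M rho R r nu = {}"
    proof (intro allI impI equals0I)
      fix nu p assume "nu \<ge> (0::real)" "p \<in> Pi_rho_nu M rho R r nu"
      then have mp: "m p = nu" and mn: "\<And>q. m q = nu \<Longrightarrow> rho (excess_ret R r p) \<le> rho (excess_ret R r q)"
        by (auto simp: Pi_rho_nu_def Pi_nu_def E)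
      have sv: "sg v > 0" using v_ne sg_pos by simp
      define q where "q = p + ((2 * sg p + 1) / sg v) *\<^sub>R v"
      have mq: "m q = nu" using mp mv by (simp add: q_def m_add m_scale)
      have s1: "sg (((2 * sg p + 1) / sg v) *\<^sub>R v) = 2 * sg p + 1"
        using sv sg_nonneg[of p] by (simp add: sg_scale)
      have "sg (((2 * sg p + 1) / sg v) *\<^sub>R v) = sg (q + (-1) *\<^sub>R p)" by (simp add: q_def)
      also have "\<dots> \<le> sg q + sg p" using sg_tri[of q "(-1) *\<^sub>R p"] sg_scale[of "-1" p] by simp
      finally have lo: "sg p + 1 \<le> sg q" using s1 by simp
      have "sg q * z < sg p * z" using lo z by (intro mult_strict_right_mono_neg) auto
      then have "sg q * z - m q < sg p * z - m p" using mp mq by linarith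
      then show False using mn[OF mq] rho_fin_case[OF z(1)] by simp
    qed
  qed
  show ?thesis using parta partb partc partd parte by (simp add: SR_def rZ_def)
qed

end
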